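(* For every quantifier-free $\tau_0$-formula $\varphi$ and every variable $x$ there exists a quantifier-free $\tau_0$-formula $\psi$ such that $\exists x.\,\varphi$ is equivalent to $\psi$ over $\mathfrak{L}$.
   Context: $\mathfrak{L}$ is the structure with domain $\mathbb{Q}$ and signature $\tau_0=\{<,1\}\cup\{c\cdot\}_{c\in\mathbb{Q}}$, where $<$ is the usual strict order on $\mathbb{Q}$, $1$ is a constant symbol denoting $1$, and each $c\cdot$ is a unary function symbol denoting $x\mapsto cx$. *)

theory Defs
  imports Complex_Main
begin

text \<open>Terms of the signature tau0 = {<, 1} plus unary c* for each rational c.
  Variables are indexed by natural numbers.\<close>
datatype tm = Var nat | One | Scal rat tm

datatype qf = Eq tm tm | Less tm tm | FFalse | Neg qf | Conj qf qf | Disj qf qf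

text \<open>Semantics in the structure L with domain Q.\<close>
fun tm_val :: "(nat \<Rightarrow> rat) \<Rightarrow> tm \<Rightarrow> rat" where
  "tm_val v (Var i) = v i"
| "tm_val v One = 1"
| "tm_val v (Scal c t) = c * tm_val v t"

fun qf_sat :: "(nat \<Rightarrow> rat) \<Rightarrow> qf \<Rightarrow> bool" where
  "qf_sat v (Eq s t) = (tm_val v s = tm_val v t)"
| "qf_sat v (Less s t) = (tm_val v s < tm_val v t)"
| "qf_sat v FFalse = False"
| "qf_sat v (Neg p) = (\<not> qf_sat v p)"
| "qf_sat v (Conj p q) = (qf_sat v p \<and> qf_sat v q)"
| "qf_sat v (Disj p q) = (qf_sat v p \<or> qf_sat v q)"

end

theory Submission
  imports Defs
begin

lemma lin_conv:
  fixes d e a :: rat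
  shows "d > 0 \<Longrightarrow> (d*a<e \<longleftrightarrow> a<e/d) \<and> (d*a=e \<longleftrightarrow> a=e/d)"
    and "d < 0 \<Longrightarrow> (d*a<e \<longleftrightarrow> e/d<a) \<and> (d*a=e \<longleftrightarrow> a=e/d)"
  by (auto simp: field_simps)

lemma lin_same:
  fixes d e p q :: rat
  assumes "d \<noteq> 0" "\<not> (p \<le> e/d \<and> e/d \<le> q)" "p \<le> q"
  shows "(d*p<e \<longleftrightarrow> d*q<e) \<and> (d*p=e \<longleftrightarrow> d*q=e)"
proof (cases "d > 0")
  case True
  then show ?thesis using assms lin_conv(1)[OF True, of p e] lin_conv(1)[OF True, of q e] by auto
next
  case False
  then have T: "d < 0" using assms by simp
  then show ?thesis using assms lin_conv(2)[OF T, of p e] lin_conv(2)[OF T, of q e] by auto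
qed

lemma lin_plus:
  fixes d e r :: rat
  shows "\<exists>\<delta>>0. \<forall>a. r < a \<and> a < r + \<delta> \<longrightarrow>
     ((d*a<e \<longleftrightarrow> d*r<e \<or> (d*r=e \<and> d<0)) \<and> (d*a=e \<longleftrightarrow> d*r=e \<and> d=0))"
proof (cases "d = 0")
  case True then show ?thesis by (intro exI[of _ 1]) auto
next
  case False
  have "\<exists>\<delta>>0. r + \<delta> \<le> e/d \<or> e/d \<le> r"
    by (cases "e/d \<le> r") (auto intro: exI[of _ 1] exI[of _ "e/d - r"])
  then obtain \<delta> where dp: "\<delta> > 0" and h: "r + \<delta> \<le> e/d \<or> e/d \<le> r" by blast
  have "\<forall>a. r < a \<and> a < r + \<delta> \<longrightarrow>
     ((d*a<e \<longleftrightarrow> d*r<e \<or> (d*r=e \<and> d<0)) \<and> (d*a=e \<longleftrightarrow> d*r=e \<and> d=0))"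
  proof (intro allI impI)
    fix a assume a: "r < a \<and> a < r + \<delta>"
    show "((d*a<e \<longleftrightarrow> d*r<e \<or> (d*r=e \<and> d<0)) \<and> (d*a=e \<longleftrightarrow> d*r=e \<and> d=0))"
    proof (cases "d > 0")
      case True
      then show ?thesis using a h lin_conv(1)[OF True, of a e] lin_conv(1)[OF True, of r e] by auto
    next
      case False
      then have T: "d < 0" using \<open>d \<noteq> 0\<close> by simp
      then show ?thesis using a h lin_conv(2)[OF T, of a e] lin_conv(2)[OF T, of r e] by auto
    qed
  qed
  then show ?thesis using dp by blast
qed

lemma lin_minf:
  fixes d e :: rat
  shows "\<exists>M. \<forall>a<M. ((d*a<e \<longleftrightarrow> (d>0 \<or> (d=0 \<and> 0<e))) \<and> (d*a=e \<longleftrightarrow> d=0 \<and> e=0))"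
proof (cases "d = 0")
  case True then show ?thesis by auto
next
  case False
  show ?thesis
  proof (intro exI[of _ "- \<bar>e/d\<bar>"] allI impI)
    fix a assume a: "a < - \<bar>e/d\<bar>"
    show "((d*a<e \<longleftrightarrow> (d>0 \<or> (d=0 \<and> 0<e))) \<and> (d*a=e \<longleftrightarrow> d=0 \<and> e=0))"
    proof (cases "d > 0")
      case True
      have "a < e/d" using a abs_ge_minus_self[of "e/d"] by linarith
      then show ?thesis using True lin_conv(1)[OF True, of a e] by auto
    next
      case False
      then have T: "d < 0" using \<open>d \<noteq> 0\<close> by simp
      have "a < e/d" using a abs_ge_minus_self[of "e/d"] by linarith
      then show ?thesis using T lin_conv(2)[OF T, of a e] by auto
    qed
  qed
qed

fun coef :: "nat \<Rightarrow> tm \<Rightarrow> rat" where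
  "coef x (Var i) = (if i = x then 1 else 0)"
| "coef x One = 0"
| "coef x (Scal c t) = c * coef x t"

fun hasx :: "nat \<Rightarrow> tm \<Rightarrow> bool" where
  "hasx x (Var i) = (i = x)"
| "hasx x One = False"
| "hasx x (Scal c t) = hasx x t"

fun substt :: "nat \<Rightarrow> tm \<Rightarrow> tm \<Rightarrow> tm" where
  "substt x u (Var i) = (if i = x then u else Var i)"
| "substt x u One = One"
| "substt x u (Scal c t) = Scal c (substt x u t)"

lemma val_substt: "tm_val v (substt x u t) = tm_val (v(x := tm_val v u)) t"
  by (induction t) auto

lemma val_lin: "tm_val (v(x := a)) t = coef x t * a + tm_val (v(x := 0)) t"
  by (induction t) (auto simp: algebra_simps)

lemma nohasx_coef: "\<not> hasx x t \<Longrightarrow> coef x t = 0"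
  by (induction t) auto

lemma hasx_const: "hasx x t \<Longrightarrow> tm_val (v(x := 0)) t = 0"
  by (induction t) auto

lemma nohasx_val: "\<not> hasx x t \<Longrightarrow> tm_val (v(x := a)) t = tm_val v t"
  by (induction t) auto

lemma nohasx_substt: "\<not> hasx x u \<Longrightarrow> \<not> hasx x (substt x u t)"
  by (induction t) auto

fun substf :: "nat \<Rightarrow> tm \<Rightarrow> qf \<Rightarrow> qf" where
  "substf x u (Eq s t) = Eq (substt x u s) (substt x u t)"
| "substf x u (Less s t) = Less (substt x u s) (substt x u t)"
| "substf x u FFalse = FFalse"
| "substf x u (Neg p) = Neg (substf x u p)"
| "substf x u (Conj p q) = Conj (substf x u p) (substf x u q)"
| "substf x u (Disj p q) = Disj (substf x u p) (substf x u q)"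

lemma sat_substf: "qf_sat v (substf x u p) = qf_sat (v(x := tm_val v u)) p"
  by (induction p) (simp_all add: val_substt fun_upd_def)

fun plusf :: "nat \<Rightarrow> tm \<Rightarrow> qf \<Rightarrow> qf" where
  "plusf x u (Eq s t) = (if coef x s = coef x t then Eq (substt x u s) (substt x u t) else FFalse)"
| "plusf x u (Less s t) = Disj (Less (substt x u s) (substt x u t))
     (if coef x s < coef x t then Eq (substt x u s) (substt x u t) else FFalse)"
| "plusf x u FFalse = FFalse"
| "plusf x u (Neg p) = Neg (plusf x u p)"
| "plusf x u (Conj p q) = Conj (plusf x u p) (plusf x u q)"
| "plusf x u (Disj p q) = Disj (plusf x u p) (plusf x u q)"

fun minf :: "nat \<Rightarrow> qf \<Rightarrow> qf" where
  "minf x (Eq s t) = (if coef x s = coef x t then Eq (substt x One s) (substt x One t) else FFalse)"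
| "minf x (Less s t) = (if coef x s < coef x t then FFalse else if coef x t < coef x s then Neg FFalse
     else Less (substt x One s) (substt x One t))"
| "minf x FFalse = FFalse"
| "minf x (Neg p) = Neg (minf x p)"
| "minf x (Conj p q) = Conj (minf x p) (minf x q)"
| "minf x (Disj p q) = Disj (minf x p) (minf x q)"

definition root :: "nat \<Rightarrow> tm \<Rightarrow> tm \<Rightarrow> tm" where
  "root x s t = (if hasx x s then Scal (1 / (coef x s - coef x t)) (substt x (Scal 0 One) t)
     else Scal (- 1 / (coef x s - coef x t)) (substt x (Scal 0 One) s))"

fun roots :: "nat \<Rightarrow> qf \<Rightarrow> tm list" where
  "roots x (Eq s t) = (if coef x s \<noteq> coef x t then [root x s t] else [])"
| "roots x (Less s t) = (if coef x s \<noteq> coef x t then [root x s t] else [])"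
| "roots x FFalse = []"
| "roots x (Neg p) = roots x p"
| "roots x (Conj p q) = roots x p @ roots x q"
| "roots x (Disj p q) = roots x p @ roots x q"

lemma root_nohasx: "\<not> hasx x (root x s t)"
  unfolding root_def by (auto intro!: nohasx_substt)

lemma roots_nohasx: "u \<in> set (roots x p) \<Longrightarrow> \<not> hasx x u"
  by (induction p) (auto split: if_splits simp: root_nohasx)

lemma root_val:
  assumes "coef x s \<noteq> coef x t"
  shows "tm_val v (root x s t) =
    (tm_val (v(x:=0)) t - tm_val (v(x:=0)) s) / (coef x s - coef x t)"
proof (cases "hasx x s")
  case True
  then show ?thesis using hasx_const[OF True, of v]
    by (simp add: root_def val_substt)
next
  case False
  then have "coef x s = 0" by (rule nohasx_coef)
  then have "hasx x t" using assms nohasx_coef by metis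
  then show ?thesis using False hasx_const[of x t v]
    by (simp add: root_def val_substt)
qed

lemma atom_less: "qf_sat (v(x:=a)) (Less s t) =
  ((coef x s - coef x t) * a < tm_val (v(x:=0)) t - tm_val (v(x:=0)) s)"
  using val_lin[of v x a s] val_lin[of v x a t] by (auto simp: algebra_simps)

lemma atom_eq: "qf_sat (v(x:=a)) (Eq s t) =
  ((coef x s - coef x t) * a = tm_val (v(x:=0)) t - tm_val (v(x:=0)) s)"
  using val_lin[of v x a s] val_lin[of v x a t] by (auto simp: algebra_simps)

lemma same_interval:
  assumes "p \<le> q" "\<forall>u\<in>set (roots x f). \<not> (p \<le> tm_val v u \<and> tm_val v u \<le> q)"
  shows "qf_sat (v(x:=p)) f = qf_sat (v(x:=q)) f"
  using assms(2)
proof (induction f)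
  case (Eq s t)
  show ?case
  proof (cases "coef x s = coef x t")
    case True then show ?thesis by (simp only: atom_eq) simp
  next
    case False
    then show ?thesis using Eq lin_same[of "coef x s - coef x t" p
      "tm_val (v(x:=0)) t - tm_val (v(x:=0)) s" q] assms(1) root_val[OF False, of v]
      by (simp only: atom_eq) simp
  qed
next
  case (Less s t)
  show ?case
  proof (cases "coef x s = coef x t")
    case True then show ?thesis by (simp only: atom_less) simp
  next
    case False
    then show ?thesis using Less lin_same[of "coef x s - coef x t" p
      "tm_val (v(x:=0)) t - tm_val (v(x:=0)) s" q] assms(1) root_val[OF False, of v]
      by (simp only: atom_less) simp
  qed
qed auto

lemma plus_correct:
  assumes "\<not> hasx x u"
  shows "\<exists>\<delta>>0. \<forall>a. tm_val v u < a \<and> a < tm_val v u + \<delta> \<longrightarrow>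
           (qf_sat (v(x:=a)) f = qf_sat v (plusf x u f))"
proof (induction f)
  case (Eq s t)
  have e: "qf_sat v (plusf x u (Eq s t)) = (coef x s - coef x t = 0 \<and>
     (coef x s - coef x t) * tm_val v u = tm_val (v(x:=0)) t - tm_val (v(x:=0)) s)"
    using atom_eq[of v x "tm_val v u" s t] by (auto simp: val_substt)
  show ?case using lin_plus[of "tm_val v u" "coef x s - coef x t" "tm_val (v(x:=0)) t - tm_val (v(x:=0)) s"]
    unfolding e atom_eq by auto
next
  case (Less s t)
  have e: "qf_sat v (plusf x u (Less s t)) = (
     (coef x s - coef x t) * tm_val v u < tm_val (v(x:=0)) t - tm_val (v(x:=0)) s \<or>
     ((coef x s - coef x t) * tm_val v u = tm_val (v(x:=0)) t - tm_val (v(x:=0)) s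
       \<and> coef x s - coef x t < 0))"
    using atom_eq[of v x "tm_val v u" s t] atom_less[of v x "tm_val v u" s t] by (auto simp: val_substt)
  show ?case using lin_plus[of "tm_val v u" "coef x s - coef x t" "tm_val (v(x:=0)) t - tm_val (v(x:=0)) s"]
    unfolding e atom_less by auto
next
  case FFalse then show ?case by (intro exI[of _ 1]) auto
next
  case (Neg f) then show ?case by auto
next
  case (Conj f g)
  then obtain d1 d2 where "d1 > 0" "d2 > 0"
    "\<forall>a. tm_val v u < a \<and> a < tm_val v u + d1 \<longrightarrow> qf_sat (v(x:=a)) f = qf_sat v (plusf x u f)"
    "\<forall>a. tm_val v u < a \<and> a < tm_val v u + d2 \<longrightarrow> qf_sat (v(x:=a)) g = qf_sat v (plusf x u g)"
    by blast
  then show ?case by (intro exI[of _ "min d1 d2"]) (auto simp: fun_upd_def)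
next
  case (Disj f g)
  then obtain d1 d2 where "d1 > 0" "d2 > 0"
    "\<forall>a. tm_val v u < a \<and> a < tm_val v u + d1 \<longrightarrow> qf_sat (v(x:=a)) f = qf_sat v (plusf x u f)"
    "\<forall>a. tm_val v u < a \<and> a < tm_val v u + d2 \<longrightarrow> qf_sat (v(x:=a)) g = qf_sat v (plusf x u g)"
    by blast
  then show ?case by (intro exI[of _ "min d1 d2"]) (auto simp: fun_upd_def)
qed

lemma minf_correct:
  shows "\<exists>M. \<forall>a<M. qf_sat (v(x:=a)) f = qf_sat v (minf x f)"
proof (induction f)
  case (Eq s t)
  have e: "qf_sat v (minf x (Eq s t)) = (coef x s - coef x t = 0 \<and>
     tm_val (v(x:=0)) t - tm_val (v(x:=0)) s = 0)"
    using atom_eq[of v x 1 s t] by (auto simp: val_substt)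
  show ?case using lin_minf[of "coef x s - coef x t" "tm_val (v(x:=0)) t - tm_val (v(x:=0)) s"]
    unfolding e atom_eq by auto
next
  case (Less s t)
  have e: "qf_sat v (minf x (Less s t)) = (coef x s - coef x t > 0 \<or> (coef x s - coef x t = 0 \<and>
     0 < tm_val (v(x:=0)) t - tm_val (v(x:=0)) s))"
    using atom_less[of v x 1 s t] by (auto simp: val_substt)
  show ?case using lin_minf[of "coef x s - coef x t" "tm_val (v(x:=0)) t - tm_val (v(x:=0)) s"]
    unfolding e atom_less by auto
next
  case (Conj f g)
  then obtain M1 M2 where "\<forall>a<M1. qf_sat (v(x:=a)) f = qf_sat v (minf x f)"
    "\<forall>a<M2. qf_sat (v(x:=a)) g = qf_sat v (minf x g)" by blast
  then show ?case by (intro exI[of _ "min M1 M2"]) (auto simp: fun_upd_def)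
next
  case (Disj f g)
  then obtain M1 M2 where "\<forall>a<M1. qf_sat (v(x:=a)) f = qf_sat v (minf x f)"
    "\<forall>a<M2. qf_sat (v(x:=a)) g = qf_sat v (minf x g)" by blast
  then show ?case by (intro exI[of _ "min M1 M2"]) (auto simp: fun_upd_def)
qed auto

lemma sat_disjs: "qf_sat v (foldr Disj l FFalse) = (\<exists>f\<in>set l. qf_sat v f)"
  by (induction l) auto

lemma main_equiv:
  "(\<exists>a. qf_sat (v(x := a)) \<phi>) \<longleftrightarrow> qf_sat v (Disj (minf x \<phi>)
      (foldr Disj (map (\<lambda>u. Disj (substf x u \<phi>) (plusf x u \<phi>)) (roots x \<phi>)) FFalse))"
  (is "?L \<longleftrightarrow> ?R")
proof
  assume ?R
  then consider "qf_sat v (minf x \<phi>)"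
    | u where "u \<in> set (roots x \<phi>)" "qf_sat v (substf x u \<phi>)"
    | u where "u \<in> set (roots x \<phi>)" "qf_sat v (plusf x u \<phi>)"
    by (auto simp: sat_disjs)
  then show ?L
  proof cases
    case 1
    obtain M where "\<forall>a<M. qf_sat (v(x:=a)) \<phi> = qf_sat v (minf x \<phi>)"
      using minf_correct by blast
    then have "qf_sat (v(x:=M-1)) \<phi>" using 1 by auto
    then show ?thesis by blast
  next
    case 2
    then show ?thesis by (auto simp: sat_substf)
  next
    case 3
    obtain \<delta> where d: "\<delta> > 0" "\<forall>a. tm_val v u < a \<and> a < tm_val v u + \<delta> \<longrightarrow>
           (qf_sat (v(x:=a)) \<phi> = qf_sat v (plusf x u \<phi>))"
      using plus_correct[OF roots_nohasx[OF 3(1)]] by blast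
    then have "qf_sat (v(x:=tm_val v u + \<delta>/2)) \<phi>" using 3 by auto
    then show ?thesis by blast
  qed
next
  assume ?L
  then obtain a where a: "qf_sat (v(x := a)) \<phi>" by blast
  define R where "R = tm_val v ` set (roots x \<phi>)"
  have finR: "finite R" unfolding R_def by simp
  show ?R
  proof (cases "a \<in> R")
    case True
    then obtain u where "u \<in> set (roots x \<phi>)" "tm_val v u = a" unfolding R_def by blast
    then show ?thesis using a by (auto simp: sat_disjs sat_substf)
  next
    case aR: False
    show ?thesis
    proof (cases "{\<rho>\<in>R. \<rho> < a} = {}")
      case True
      obtain M where M: "\<forall>a<M. qf_sat (v(x:=a)) \<phi> = qf_sat v (minf x \<phi>)"
        using minf_correct by blast
      define a' where "a' = min a (M - 1)"
      have "a' \<le> a" "a' < M" unfolding a'_def by auto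
      have "qf_sat (v(x:=a')) \<phi> = qf_sat (v(x:=a)) \<phi>"
      proof (rule same_interval[OF \<open>a' \<le> a\<close>], intro ballI notI)
        fix u assume "u \<in> set (roots x \<phi>)" "a' \<le> tm_val v u \<and> tm_val v u \<le> a"
        then have "tm_val v u \<in> R" "tm_val v u \<le> a" unfolding R_def by auto
        then show False using True aR by (cases "tm_val v u = a") auto
      qed
      then have "qf_sat v (minf x \<phi>)" using M \<open>a' < M\<close> a by auto
      then show ?thesis by simp
    next
      case False
      define r where "r = Max {\<rho>\<in>R. \<rho> < a}"
      have fin: "finite {\<rho>\<in>R. \<rho> < a}" using finR by simp
      have rin: "r \<in> {\<rho>\<in>R. \<rho> < a}" unfolding r_def using Max_in[OF fin False] .
      have rmax: "\<And>\<rho>. \<rho> \<in> R \<Longrightarrow> \<rho> < a \<Longrightarrow> \<rho> \<le> r" unfolding r_def using fin by auto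
      obtain u where u: "u \<in> set (roots x \<phi>)" "tm_val v u = r" using rin unfolding R_def by blast
      obtain \<delta> where d: "\<delta> > 0" "\<forall>b. tm_val v u < b \<and> b < tm_val v u + \<delta> \<longrightarrow>
           (qf_sat (v(x:=b)) \<phi> = qf_sat v (plusf x u \<phi>))"
        using plus_correct[OF roots_nohasx[OF u(1)]] by blast
      define a' where "a' = min a (r + \<delta>/2)"
      have "a' \<le> a" "r < a'" "a' < r + \<delta>" unfolding a'_def using rin d(1) by auto
      have "qf_sat (v(x:=a')) \<phi> = qf_sat (v(x:=a)) \<phi>"
      proof (rule same_interval[OF \<open>a' \<le> a\<close>], intro ballI notI)
        fix w assume "w \<in> set (roots x \<phi>)" "a' \<le> tm_val v w \<and> tm_val v w \<le> a"
        then have "tm_val v w \<in> R" "a' \<le> tm_val v w" "tm_val v w \<le> a" unfolding R_def by auto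
        moreover have "tm_val v w \<noteq> a" using aR \<open>tm_val v w \<in> R\<close> by auto
        ultimately show False using rmax[of "tm_val v w"] \<open>r < a'\<close> by auto
      qed
      then have "qf_sat v (plusf x u \<phi>)" using d(2) u(2) \<open>r < a'\<close> \<open>a' < r + \<delta>\<close> a by auto
      then show ?thesis using u(1) by (auto simp: sat_disjs)
    qed
  qed
qed

theorem lemma1:
  fixes \<phi> :: qf and x :: nat
  shows "\<exists>\<psi> :: qf. \<forall>v :: nat \<Rightarrow> rat.
           (\<exists>a :: rat. qf_sat (v(x := a)) \<phi>) \<longleftrightarrow> qf_sat v \<psi>"
  using main_equiv by blast

end
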